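(* Let $d\ge1$. Let $M$ be a random symmetric $d\times d$ matrix whose entries $M_{a,b}$, $a\ge b$, are independent and uniform on $\{-1,+1\}$. Let $j$ be independent of $M$ and uniform on $\{\lceil d/2\rceil,\dots,d\}$. Let $S=f(M)$, where $f$ is any deterministic function taking values in bit strings of length at most $d^2/128$. Let $\hat M_j=g(S,j)\in\mathbb R^d$ for an arbitrary deterministic function $g$. Then $$\mathbb E_{M,j}\Big[\big\|[\hat M_j-M_j]\big\|^2\Big]\ge\frac d8,$$ where $M_j$ denotes the $j$-th column of $M$.
   Context: For a scalar $w$, $[w]=\min\{1,\max\{-1,w\}\}$ denotes clipping to $[-1,1]$. For a vector $\mathbf w=(w_1,\dots,w_d)$, $[\mathbf w]=([w_1],\dots,[w_d])$. *)

theory Defs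
  imports "HOL-Probability.Probability"
begin

definition clip :: "real \<Rightarrow> real" where
  "clip w = min 1 (max (-1) w)"

text \<open>Symmetric d x d matrices with entries in {-1,+1}, indexed by {1..d}
  (entries outside the index range are fixed to 0 so the set is finite).
  The uniform distribution on this set is exactly the distribution with
  independent uniform signs M a b for a \<ge> b.\<close>
definition sym_sign_matrices :: "nat \<Rightarrow> (nat \<Rightarrow> nat \<Rightarrow> real) set" where
  "sym_sign_matrices d =
     {M. (\<forall>a\<in>{1..d}. \<forall>b\<in>{1..d}. M a b \<in> {-1, 1} \<and> M a b = M b a)
       \<and> (\<forall>a b. (a \<notin> {1..d} \<or> b \<notin> {1..d}) \<longrightarrow> M a b = 0)}"

text \<open>Squared Euclidean norm of the coordinatewise clipped difference
  [v - M_j], vectors in R^d represented as functions on {1..d}.\<close>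
definition clipped_sq_err :: "nat \<Rightarrow> (nat \<Rightarrow> real) \<Rightarrow> (nat \<Rightarrow> nat \<Rightarrow> real) \<Rightarrow> nat \<Rightarrow> real" where
  "clipped_sq_err d v M j = (\<Sum>i=1..d. (clip (v i - M i j))\<^sup>2)"

end

theory Submission
  imports Defs
begin


definition PP :: "nat \<Rightarrow> (nat \<times> nat) set" where
  "PP d = {(a,b). 1 \<le> b \<and> b \<le> a \<and> a \<le> d}"

definition extM :: "nat \<Rightarrow> (nat \<times> nat \<Rightarrow> real) \<Rightarrow> nat \<Rightarrow> nat \<Rightarrow> real" where
  "extM d x a b = (if (a,b) \<in> PP d then x (a,b) else if (b,a) \<in> PP d then x (b,a) else 0)"

lemma finite_PP: "finite (PP d)"
proof -
  have "PP d \<subseteq> {1..d} \<times> {1..d}" by (auto simp: PP_def)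
  thus ?thesis by (rule finite_subset) auto
qed

lemma ext_bij: "bij_betw (extM d) (PiE (PP d) (\<lambda>_. {-1,1::real})) (sym_sign_matrices d)"
proof (rule bij_betwI')
  fix x y assume x: "x \<in> PiE (PP d) (\<lambda>_. {-1,1::real})" and y: "y \<in> PiE (PP d) (\<lambda>_. {-1,1::real})"
  show "(extM d x = extM d y) = (x = y)"
  proof
    assume e: "extM d x = extM d y"
    show "x = y"
    proof
      fix p show "x p = y p"
      proof (cases "p \<in> PP d")
        case True
        obtain a b where p: "p = (a,b)" by force
        have "extM d x a b = extM d y a b" using e by simp
        thus ?thesis using True p by (simp add: extM_def)
      next
        case False thus ?thesis using x y by (metis PiE_arb)
      qed
    qed
  qed simp
next
  fix x assume x: "x \<in> PiE (PP d) (\<lambda>_. {-1,1::real})"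
  show "extM d x \<in> sym_sign_matrices d"
    unfolding sym_sign_matrices_def
  proof (intro CollectI conjI ballI allI impI)
    fix a b assume a: "a \<in> {1..d}" and b: "b \<in> {1..d}"
    have "(a,b) \<in> PP d \<or> (b,a) \<in> PP d" using a b by (auto simp: PP_def)
    then show "extM d x a b \<in> {-1, 1}" using x by (auto simp: extM_def PiE_def Pi_def)
    show "extM d x a b = extM d x b a" using a b by (auto simp: extM_def PP_def)
  next
    fix a b assume "a \<notin> {1..d} \<or> b \<notin> {1..d}"
    thus "extM d x a b = 0" by (auto simp: extM_def PP_def)
  qed
next
  fix M assume M: "M \<in> sym_sign_matrices d"
  define x where "x = restrict (\<lambda>(a,b). M a b) (PP d)"
  have "x \<in> PiE (PP d) (\<lambda>_. {-1,1::real})"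
  proof -
    have "M a b \<in> {-1,1}" if "(a,b) \<in> PP d" for a b
      using M that unfolding sym_sign_matrices_def PP_def by auto
    thus ?thesis by (auto simp: x_def)
  qed
  moreover have "M = extM d x"
  proof (intro ext)
    fix a b show "M a b = extM d x a b"
      using M by (auto simp: x_def extM_def PP_def sym_sign_matrices_def)
  qed
  ultimately show "\<exists>x\<in>PiE (PP d) (\<lambda>_. {-1,1::real}). M = extM d x" by blast
qed

lemma finite_Mset: "finite (sym_sign_matrices d)"
  using bij_betw_finite[OF ext_bij] finite_PP by (auto intro: finite_PiE)

lemma card_Mset: "card (sym_sign_matrices d) = 2 ^ card (PP d)"
proof -
  have "card (sym_sign_matrices d) = card (PiE (PP d) (\<lambda>_. {-1,1::real}))"
    using bij_betw_same_card[OF ext_bij] by simp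
  also have "\<dots> = 2 ^ card (PP d)" by (simp add: card_PiE finite_PP numeral_2_eq_2)
  finally show ?thesis .
qed

lemma moment:
  fixes y :: real
  assumes B: "B \<subseteq> PP d" and tau: "\<And>p. p \<in> B \<Longrightarrow> \<tau> p \<in> {-1,1}"
  shows "(\<Sum>M\<in>sym_sign_matrices d. y ^ card {p\<in>B. M (fst p) (snd p) \<noteq> \<tau> p})
         = card (sym_sign_matrices d) * ((1+y)/2) ^ card B"
proof -
  define w where "w = (\<lambda>p (v::real). if p \<in> B \<and> v \<noteq> \<tau> p then y else 1)"
  define X where "X = PiE (PP d) (\<lambda>_. {-1,1::real})"
  have "(\<Sum>M\<in>sym_sign_matrices d. y ^ card {p\<in>B. M (fst p) (snd p) \<noteq> \<tau> p})
      = (\<Sum>x\<in>X. y ^ card {p\<in>B. extM d x (fst p) (snd p) \<noteq> \<tau> p})"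
    unfolding X_def by (rule sum.reindex_bij_betw[OF ext_bij, symmetric])
  also have "\<dots> = (\<Sum>x\<in>X. \<Prod>p\<in>PP d. w p (x p))"
  proof (rule sum.cong[OF refl])
    fix x
    have e: "{p\<in>PP d. p \<in> B \<and> x p \<noteq> \<tau> p} = {p\<in>B. extM d x (fst p) (snd p) \<noteq> \<tau> p}"
      using B by (auto simp: extM_def)
    have "(\<Prod>p\<in>PP d. w p (x p)) = prod (\<lambda>_. y) {p\<in>PP d. p \<in> B \<and> x p \<noteq> \<tau> p}"
      unfolding w_def using prod.inter_filter[OF finite_PP, where g="\<lambda>_. y" and P="\<lambda>p. p \<in> B \<and> x p \<noteq> \<tau> p"] by simp
    also have "\<dots> = y ^ card {p\<in>B. extM d x (fst p) (snd p) \<noteq> \<tau> p}"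
      by (simp add: e)
    finally show "y ^ card {p\<in>B. extM d x (fst p) (snd p) \<noteq> \<tau> p} = (\<Prod>p\<in>PP d. w p (x p))" by simp
  qed
  also have "\<dots> = (\<Prod>p\<in>PP d. \<Sum>v\<in>{-1,1}. w p v)"
    unfolding X_def by (rule prod_sum_PiE[symmetric]) (auto simp: finite_PP)
  also have "\<dots> = (\<Prod>p\<in>PP d. if p \<in> B then 1 + y else 2)"
  proof (rule prod.cong[OF refl])
    fix p assume "p \<in> PP d"
    show "(\<Sum>v\<in>{-1,1}. w p v) = (if p \<in> B then 1 + y else 2)"
      using tau[of p] by (auto simp: w_def)
  qed
  also have "\<dots> = (1+y) ^ card B * 2 ^ (card (PP d) - card B)"
  proof -
    have "PP d \<inter> {x. x \<in> B} = B" using B by auto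
    moreover have "PP d \<inter> - {x. x \<in> B} = PP d - B" by auto
    ultimately show ?thesis
      by (simp add: prod.If_cases finite_PP card_Diff_subset finite_subset[OF B finite_PP] B)
  qed
  also have "\<dots> = card (sym_sign_matrices d) * ((1+y)/2) ^ card B"
  proof -
    have le: "card B \<le> card (PP d)" using B finite_PP by (rule card_mono[rotated])
    have "(2::real) ^ card (PP d) = 2 ^ card B * 2 ^ (card (PP d) - card B)"
      using le by (simp add: power_add[symmetric])
    thus ?thesis by (simp add: card_Mset power_divide)
  qed
  finally show ?thesis .
qed

definition sg :: "real \<Rightarrow> real" where "sg t = (if t \<ge> 0 then 1 else -1)"

lemma sg_mem: "sg t \<in> {-1,1}" by (simp add: sg_def)

lemma pt: assumes "m \<in> {-1,1}"
  shows "(if m \<noteq> sg v then 1 else 0) \<le> (clip (v - m))\<^sup>2"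
  using assms by (auto simp: sg_def clip_def)

lemma err_bound:
  assumes M: "M \<in> sym_sign_matrices d" and j: "j \<in> {1..d}"
  shows "real (card {i\<in>{1..j}. M j i \<noteq> sg (v i)}) \<le> clipped_sq_err d v M j"
proof -
  have "real (card {i\<in>{1..j}. M j i \<noteq> sg (v i)}) = (\<Sum>i\<in>{1..j}. if M j i \<noteq> sg (v i) then 1 else 0)"
    using sum.inter_filter[of "{1..j}" "\<lambda>_. (1::real)" "\<lambda>i. M j i \<noteq> sg (v i)"] by simp
  also have "\<dots> \<le> (\<Sum>i\<in>{1..j}. (clip (v i - M i j))\<^sup>2)"
  proof (rule sum_mono)
    fix i assume i: "i \<in> {1..j}"
    have "M i j \<in> {-1,1} \<and> M i j = M j i" using M i j unfolding sym_sign_matrices_def by auto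
    thus "(if M j i \<noteq> sg (v i) then 1 else 0) \<le> (clip (v i - M i j))\<^sup>2"
      using pt[of "M i j" "v i"] by auto
  qed
  also have "\<dots> \<le> (\<Sum>i\<in>{1..d}. (clip (v i - M i j))\<^sup>2)"
    by (rule sum_mono2) (use j in auto)
  finally show ?thesis by (simp add: clipped_sq_err_def)
qed

lemma colsum:
  assumes M: "M \<in> sym_sign_matrices d" and J: "J \<subseteq> {1..d}"
  shows "real (card {p\<in>Sigma J (\<lambda>j. {1..j}). M (fst p) (snd p) \<noteq> sg (v (fst p) (snd p))})
     \<le> (\<Sum>j\<in>J. clipped_sq_err d (v j) M j)"
proof -
  have fJ: "finite J" using J finite_subset by blast
  have "{p\<in>Sigma J (\<lambda>j. {1..j}). M (fst p) (snd p) \<noteq> sg (v (fst p) (snd p))}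
        = Sigma J (\<lambda>j. {i\<in>{1..j}. M j i \<noteq> sg (v j i)})" by auto
  hence "card {p\<in>Sigma J (\<lambda>j. {1..j}). M (fst p) (snd p) \<noteq> sg (v (fst p) (snd p))}
        = (\<Sum>j\<in>J. card {i\<in>{1..j}. M j i \<noteq> sg (v j i)})"
    using fJ by (simp add: card_SigmaI)
  hence "real (card {p\<in>Sigma J (\<lambda>j. {1..j}). M (fst p) (snd p) \<noteq> sg (v (fst p) (snd p))})
        = (\<Sum>j\<in>J. real (card {i\<in>{1..j}. M j i \<noteq> sg (v j i)}))" by simp
  also have "\<dots> \<le> (\<Sum>j\<in>J. clipped_sq_err d (v j) M j)"
    by (rule sum_mono, rule err_bound[OF M]) (use J in auto)
  finally show ?thesis .
qed



lemma gsum: "2 * (\<Sum>j\<in>{c..d}. j) = (c+d)*(Suc d - c)" if "c \<le> Suc d" for c d :: nat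
  using that
proof (induction d)
  case 0 thus ?case by (cases c) auto
next
  case (Suc d)
  show ?case
  proof (cases "c = Suc (Suc d)")
    case True thus ?thesis by simp
  next
    case False
    hence c: "c \<le> Suc d" using Suc.prems by simp
    have "{c..Suc d} = insert (Suc d) {c..d}" using c by auto
    hence "2 * (\<Sum>j\<in>{c..Suc d}. j) = 2 * Suc d + 2 * (\<Sum>j\<in>{c..d}. j)" by simp
    also have "\<dots> = 2 * Suc d + (c+d)*(Suc d - c)" using Suc.IH[OF c] by simp
    also have "\<dots> = (c + Suc d) * (Suc (Suc d) - c)" using c
      by (simp add: Suc_diff_le algebra_simps)
    finally show ?thesis .
  qed
qed

lemma geo: "(\<Sum>i\<le>L. (2::nat)^i) < 2^(L+1)"
  by (induction L) auto

lemma small_num: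
  assumes "1 \<le> d" "d \<le> 11" "2*N = (((d+1) div 2) + d)*(d + 1 - (d+1) div 2)"
  shows "real ((d+1-(d+1) div 2)*d) / 8 \<le> 10*(1-(19/20::real)^N)"
proof -
  have "d=1 \<or> d=2 \<or> d=3 \<or> d=4 \<or> d=5 \<or> d=6 \<or> d=7 \<or> d=8 \<or> d=9 \<or> d=10 \<or> d=11" using assms(1,2) by presburger
  thus ?thesis
  proof (elim disjE)
    assume d: "d = 1"
    hence "N = 1" using assms(3) by simp
    thus ?thesis using d by (simp add: power_numeral_reduce)
  next
    assume d: "d = 2"
    hence "N = 3" using assms(3) by simp
    thus ?thesis using d by (simp add: power_numeral_reduce)
  next
    assume d: "d = 3"
    hence "N = 5" using assms(3) by simp
    thus ?thesis using d by (simp add: power_numeral_reduce)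
  next
    assume d: "d = 4"
    hence "N = 9" using assms(3) by simp
    thus ?thesis using d by (simp add: power_numeral_reduce)
  next
    assume d: "d = 5"
    hence "N = 12" using assms(3) by simp
    thus ?thesis using d by (simp add: power_numeral_reduce)
  next
    assume d: "d = 6"
    hence "N = 18" using assms(3) by simp
    thus ?thesis using d by (simp add: power_numeral_reduce)
  next
    assume d: "d = 7"
    hence "N = 22" using assms(3) by simp
    thus ?thesis using d by (simp add: power_numeral_reduce)
  next
    assume d: "d = 8"
    hence "N = 30" using assms(3) by simp
    thus ?thesis using d by (simp add: power_numeral_reduce)
  next
    assume d: "d = 9"
    hence "N = 35" using assms(3) by simp
    thus ?thesis using d by (simp add: power_numeral_reduce)
  next
    assume d: "d = 10"
    hence "N = 45" using assms(3) by simp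
    thus ?thesis using d by (simp add: power_numeral_reduce)
  next
    assume d: "d = 11"
    hence "N = 51" using assms(3) by simp
    thus ?thesis using d by (simp add: power_numeral_reduce)
  qed
qed

lemma big_arith:
  assumes "12 \<le> (d::nat)" "c = (d+1) div 2" "n = d+1-c" "2*N = (c+d)*n" "7*T \<le> n*d+6" "128*L \<le> d*d"
  shows "12 + 6*T + 3*L \<le> 2*N"
proof (cases "even d")
  case True
  then obtain k where d: "d = 2*k" by blast
  hence ck: "c = k" "n = k+1" using assms(2,3) by auto
  have "k \<ge> 6" using d assms(1) by simp
  hence kk: "k*k \<ge> 6*k" by simp
  have e1: "2*N = 3*(k*k) + 3*k" using assms(4) unfolding d ck by (simp add: algebra_simps)
  have e2: "7*T \<le> 2*(k*k) + 2*k + 6" using assms(5) unfolding d ck by (simp add: algebra_simps)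
  have e3: "128*L \<le> 4*(k*k)" using assms(6) unfolding d ck by (simp add: algebra_simps)
  show ?thesis using kk e1 e2 e3 \<open>k \<ge> 6\<close> by linarith
next
  case False
  then obtain k where d: "d = 2*k+1" using oddE by blast
  hence ck: "c = k+1" "n = k+1" using assms(2,3) by auto
  have "k \<ge> 6" using d assms(1) by simp
  hence kk: "k*k \<ge> 6*k" by simp
  have e1: "2*N = 3*(k*k) + 5*k + 2" using assms(4) unfolding d ck by (simp add: algebra_simps)
  have e2: "7*T \<le> 2*(k*k) + 3*k + 7" using assms(5) unfolding d ck by (simp add: algebra_simps)
  have e3: "128*L \<le> 4*(k*k) + 4*k + 1" using assms(6) unfolding d ck by (simp add: algebra_simps)
  show ?thesis using kk e1 e2 e3 \<open>k \<ge> 6\<close> by linarith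
qed

lemma big_num:
  assumes "12 + 6*T + 3*L \<le> 2*(N::nat)"
  shows "4^T * 2^(L+1) * (5/8)^N \<le> (1/8::real)"
proof -
  have a: "(4::nat)^T = 2^(2*T)" by (simp add: power_mult)
  have b: "(8::nat) = 2^3" by simp
  have "(8*4^T*2^(L+1)*5^N)^3 = ((2::nat)^(4+2*T+L)*5^N)^3"
    by (simp add: a power_add mult.assoc)
  also have "\<dots> = 2^(3*(4+2*T+L)) * (5^3)^N"
    by (simp only: power_mult_distrib power_mult[symmetric] mult.commute)
  also have "\<dots> \<le> 2^(3*(4+2*T+L)) * (2^7)^N"
    by (intro mult_le_mono2 power_mono) auto
  also have "\<dots> = 2^(3*(4+2*T+L) + 7*N)" by (simp only: power_add power_mult[symmetric])
  also have "\<dots> \<le> 2^(3*N*3)" by (rule power_increasing) (use assms in simp_all)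
  also have "\<dots> = ((2^3)^N)^3" by (simp only: power_mult)
  also have "\<dots> = (8^N)^3" by (simp only: b)
  finally have 1: "(8*4^T*2^(L+1)*5^N)^Suc 2 \<le> ((8::nat)^N)^Suc 2" by (simp only: numeral_3_eq_3 numeral_2_eq_2)
  have "8*4^T*2^(L+1)*5^N \<le> (8::nat)^N"
    by (rule power_le_imp_le_base[OF 1]) simp
  hence "real (8*4^T*2^(L+1)*5^N) \<le> real (8^N)" by (simp only: of_nat_le_iff)
  hence c: "8*4^T*2^(L+1)*5^N \<le> (8::real)^N" by simp
  have "4^T * 2^(L+1) * (5/8)^N = (8*4^T*2^(L+1)*5^N) / 8^N / (8::real)"
    by (simp add: power_divide)
  also have "\<dots> \<le> 1/8" using c by (simp add: divide_le_eq mult_ac)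
  finally show ?thesis .
qed



lemma cdef: "nat \<lceil>real d / 2\<rceil> = (d+1) div 2"
proof (cases "even d")
  case True
  then obtain k where d: "d = 2*k" by blast
  have "\<lceil>real d / 2\<rceil> = int k" by (rule ceiling_unique) (auto simp: d)
  thus ?thesis using d by simp
next
  case False
  then obtain k where d: "d = 2*k+1" using oddE by blast
  have "\<lceil>real d / 2\<rceil> = int k + 1" by (rule ceiling_unique) (auto simp: d)
  thus ?thesis using d by (simp add: nat_add_distrib)
qed

lemma mult_div_le7: "7 * ((x + 6) div 7) \<le> x + (6::nat)" by simp
lemma mult_div_le128: "128 * (x div 128) \<le> (x::nat)" by simp
lemma le_mult_div7: "x \<le> 7 * ((x + 6) div (7::nat))" by presburger

theorem mainTheorem12:
  fixes d :: nat
    and f :: "(nat \<Rightarrow> nat \<Rightarrow> real) \<Rightarrow> bool list"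
    and g :: "bool list \<Rightarrow> nat \<Rightarrow> (nat \<Rightarrow> real)"
  assumes "d \<ge> 1"
    and "\<And>M. real (length (f M)) \<le> real d ^ 2 / 128"
  shows "measure_pmf.expectation
           (pmf_of_set (sym_sign_matrices d \<times> {nat \<lceil>real d / 2\<rceil>..d}))
           (\<lambda>(M, j). clipped_sq_err d (g (f M) j) M j)
         \<ge> real d / 8"
proof -
  define Ms where "Ms = sym_sign_matrices d"
  define c where "c = (d+1) div 2"
  define J where "J = {c..d}"
  define B where "B = Sigma J (\<lambda>j. {1..j})"
  define \<tau> where "\<tau> = (\<lambda>s p. sg (g s (fst p) (snd p)))"
  define H where "H = (\<lambda>s (M::nat\<Rightarrow>nat\<Rightarrow>real). card {p\<in>B. M (fst p) (snd p) \<noteq> \<tau> s p})"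
  define N where "N = card B"
  define n where "n = card J"
  have c1: "1 \<le> c" "c \<le> d" using assms(1) by (auto simp: c_def)
  have Jsub: "J \<subseteq> {1..d}" using c1 by (auto simp: J_def)
  have finJ: "finite J" and Jne: "J \<noteq> {}" using c1 by (auto simp: J_def)
  have finMs: "finite Ms" by (simp add: Ms_def finite_Mset)
  have cMs: "card Ms > 0" by (simp add: Ms_def card_Mset)
  hence Msne: "Ms \<noteq> {}" by auto
  have n_eq: "n = d + 1 - c" by (simp add: n_def J_def)
  have BPP: "B \<subseteq> PP d" using Jsub by (auto simp: B_def PP_def)
  have N_eq: "2*N = (c+d)*n"
  proof -
    have "N = (\<Sum>j\<in>J. j)" by (simp add: N_def B_def finJ)
    thus ?thesis using gsum[of c d] c1 by (simp add: n_eq J_def)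
  qed
  have mom: "(\<Sum>M\<in>Ms. y ^ H s M) = card Ms * ((1+y)/2)^N" for s and y :: real
    unfolding Ms_def H_def N_def by (rule moment[OF BPP]) (simp add: \<tau>_def sg_def)
  have err: "real (H (f M) M) \<le> (\<Sum>j\<in>J. clipped_sq_err d (g (f M) j) M j)" if "M \<in> Ms" for M
    unfolding H_def \<tau>_def B_def using colsum[OF that[unfolded Ms_def] Jsub, of "g (f M)"] by simp
  have key: "real (card Ms) * (real (n * d) / 8) \<le> (\<Sum>M\<in>Ms. real (H (f M) M))"
  proof (cases "d \<le> 11")
    case True
    have f0: "f M = []" for M
    proof -
      have "real (length (f M)) \<le> real d ^ 2 / 128" by (rule assms(2))
      moreover have "real d ^ 2 \<le> 121"
      proof -
        have "d*d \<le> 121" using mult_le_mono[OF True True] by simp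
        hence "real (d*d) \<le> 121" by linarith
        thus ?thesis by (simp add: power2_eq_square)
      qed
      ultimately have "real (length (f M)) < 1" by linarith
      thus ?thesis by simp
    qed
    have pw: "10 - 10 * (9/10::real)^h \<le> real h" for h :: nat
      using Bernoulli_inequality[of "-1/10::real" h] by simp
    have "(\<Sum>M\<in>Ms. 10 - 10 * (9/10::real)^H [] M) \<le> (\<Sum>M\<in>Ms. real (H (f M) M))"
      by (rule sum_mono) (simp add: f0 pw)
    moreover have "(\<Sum>M\<in>Ms. 10 - 10 * (9/10::real)^H [] M) = card Ms * (10 * (1 - (19/20)^N))"
      using mom[of "9/10" "[]"] by (simp add: sum_subtractf sum_distrib_left[symmetric] algebra_simps)
    moreover have "real (n*d) / 8 \<le> 10 * (1 - (19/20::real)^N)"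
      using small_num[OF assms(1) True, of N] N_eq unfolding n_eq c_def by simp
    ultimately show ?thesis using cMs
      by (smt (verit) mult_left_mono of_nat_0_le_iff)
  next
    case False
    define T where "T = (n*d + 6) div 7"
    define L where "L = d*d div 128"
    have fl: "length (f M) \<le> L" for M
    proof -
      have "real (length (f M)) * 128 \<le> real (d * d)"
        using assms(2)[of M] by (simp add: power2_eq_square)
      hence "length (f M) * 128 \<le> d * d" by (simp only: of_nat_mult[symmetric] of_nat_le_iff of_nat_numeral)
      hence "(length (f M) * 128) div 128 \<le> (d*d) div 128" by (rule div_le_mono)
      thus ?thesis by (simp add: L_def)
    qed
    define Msg where "Msg = f ` Ms"
    have finMsg: "finite Msg" using finMs by (simp add: Msg_def)
    have "Msg \<subseteq> {xs. set xs \<subseteq> (UNIV::bool set) \<and> length xs \<le> L}" using fl by (auto simp: Msg_def)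
    hence "card Msg \<le> card {xs. set xs \<subseteq> (UNIV::bool set) \<and> length xs \<le> L}"
      by (rule card_mono[rotated]) (use finite_lists_length_le[of "UNIV::bool set" L] in simp)
    also have "\<dots> = (\<Sum>i\<le>L. 2^i)" using card_lists_length_le[of "UNIV::bool set" L] by simp
    also have "\<dots> \<le> 2^(L+1)" using geo[of L] by simp
    finally have "card Msg \<le> 2^(L+1)" .
    hence K: "real (card Msg) \<le> 2^(L+1)" by (metis of_nat_le_iff of_nat_numeral of_nat_power)
    have pw: "real T - real T * 4^T * (1/4)^h \<le> real h" for h :: nat
    proof (cases "T \<le> h")
      case True
      have "0 \<le> real T * 4^T * (1/4::real)^h" by simp
      thus ?thesis using True by linarith
    next
      case False
      hence "(4::real)^T * (1/4)^h = 4^(T-h)"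
        by (simp add: power_diff power_one_over divide_simps)
      moreover have "(1::real) \<le> 4^(T-h)" by simp
      ultimately have "real T \<le> real T * (4^T * (1/4)^h)"
        using mult_left_mono[of 1 "4^(T-h)" "real T"] by simp
      thus ?thesis by (simp add: mult.assoc)
    qed
    have s1: "(\<Sum>M\<in>Ms. (1/4::real)^H (f M) M) \<le> (\<Sum>M\<in>Ms. \<Sum>s\<in>Msg. (1/4::real)^H s M)"
      by (rule sum_mono, rule member_le_sum) (use finMs in \<open>auto simp: Msg_def\<close>)
    also have "\<dots> = (\<Sum>s\<in>Msg. \<Sum>M\<in>Ms. (1/4::real)^H s M)" by (rule sum.swap)
    also have "\<dots> = card Msg * (card Ms * (5/8)^N)" using mom[of "1/4"] by simp
    finally have s2: "(\<Sum>M\<in>Ms. (1/4::real)^H (f M) M) \<le> card Msg * (card Ms * (5/8)^N)" .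
    have d12: "12 \<le> d" using False by simp
    have T7: "7*T \<le> n*d+6" unfolding T_def by (rule mult_div_le7)
    have L128: "128*L \<le> d*d" unfolding L_def by (rule mult_div_le128)
    have ar: "12 + 6*T + 3*L \<le> 2*N"
      by (rule big_arith[OF d12 c_def n_eq N_eq T7 L128])
    have bn: "4^T * 2^(L+1) * (5/8)^N \<le> (1/8::real)" by (rule big_num[OF ar])
    have "4^T * card Msg * (5/8)^N \<le> 4^T * 2^(L+1) * (5/8::real)^N"
      by (intro mult_right_mono mult_left_mono) (use K in auto)
    hence bn2: "4^T * card Msg * (5/8)^N \<le> (1/8::real)" using bn by linarith
    have "(\<Sum>M\<in>Ms. real T - real T * 4^T * (1/4)^H (f M) M) \<le> (\<Sum>M\<in>Ms. real (H (f M) M))"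
      by (rule sum_mono) (rule pw)
    moreover have "(\<Sum>M\<in>Ms. real T - real T * 4^T * (1/4)^H (f M) M)
        = real (card Ms) * real T - real T * 4^T * (\<Sum>M\<in>Ms. (1/4)^H (f M) M)"
      by (simp add: sum_subtractf sum_distrib_left)
    moreover have "real T * 4^T * (\<Sum>M\<in>Ms. (1/4)^H (f M) M) \<le> real T * 4^T * (real (card Msg) * (real (card Ms) * (5/8::real)^N))"
      using s2 by (intro mult_left_mono) auto
    moreover have "n*d \<le> 7*T" unfolding T_def by (rule le_mult_div7)
    hence "real (n*d) \<le> 7 * real T" by linarith
    ultimately have Y: "real (card Ms) * real T - real T * 4^T * (real (card Msg) * (real (card Ms) * (5/8::real)^N)) \<le> (\<Sum>M\<in>Ms. real (H (f M) M))"
      and nd: "real (n*d) \<le> 7 * real T" by linarith+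
    have "(real (card Ms) * T) * (4^T * card Msg * (5/8)^N) \<le> (real (card Ms) * T) * (1/8)"
      by (rule mult_left_mono[OF bn2]) simp
    hence X: "real T * 4^T * (real (card Msg) * (real (card Ms) * (5/8::real)^N)) \<le> real (card Ms) * real T / 8"
      by (simp add: algebra_simps)
    have "real (card Ms) * (real (n*d) / 8) \<le> real (card Ms) * (7 * real T / 8)"
      by (rule mult_left_mono) (use nd in auto)
    thus ?thesis using X Y by (simp add: algebra_simps)
  qed
  have "measure_pmf.expectation (pmf_of_set (Ms \<times> J)) (\<lambda>(M, j). clipped_sq_err d (g (f M) j) M j)
        = (\<Sum>(M,j)\<in>Ms \<times> J. clipped_sq_err d (g (f M) j) M j) / card (Ms \<times> J)"
    by (rule integral_pmf_of_set) (use Msne Jne finMs finJ in auto)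
  also have "(\<Sum>(M,j)\<in>Ms \<times> J. clipped_sq_err d (g (f M) j) M j)
      = (\<Sum>M\<in>Ms. \<Sum>j\<in>J. clipped_sq_err d (g (f M) j) M j)"
    by (rule sum.cartesian_product[symmetric])
  finally have E: "measure_pmf.expectation (pmf_of_set (Ms \<times> J)) (\<lambda>(M, j). clipped_sq_err d (g (f M) j) M j)
        = (\<Sum>M\<in>Ms. \<Sum>j\<in>J. clipped_sq_err d (g (f M) j) M j) / (card Ms * n)"
    by (simp add: card_cartesian_product n_def)
  have "real (card Ms) * (real (n * d) / 8) \<le> (\<Sum>M\<in>Ms. \<Sum>j\<in>J. clipped_sq_err d (g (f M) j) M j)"
    using key sum_mono[of Ms "\<lambda>M. real (H (f M) M)", OF err] by linarith
  moreover have "n > 0" using finJ Jne by (simp add: n_def card_gt_0_iff)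
  ultimately have "real d / 8 \<le> (\<Sum>M\<in>Ms. \<Sum>j\<in>J. clipped_sq_err d (g (f M) j) M j) / (card Ms * n)"
    using cMs by (simp add: le_divide_eq algebra_simps)
  thus ?thesis using E by (simp add: Ms_def J_def c_def cdef)
qed

end
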